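(* Let $t,t'\in B_n$ with $t\neq t'$ and let $G$ be a digraph such that $\mathbb{A}(G)$ satisfies $t\approx t'$. Let $K$ be a nontrivial strongly connected component of $G$ that is a whirl, and let $u,w$ be vertices in the same block of $K$. If $u\to v_0\to v_1\to\dots\to v_{Z_{t,t'}}$ is a walk in $G$, then $(w,v_0)$ is an edge of $G$. Consequently, $Z_G<Z_{t,t'}$.
   Context: Digraphs $G=(V,E)$ have $E\subseteq V\times V$, loops allowed, possibly infinite. $\mathbb{A}(G)$ is the groupoid on $V\cup\{\infty\}$ with $xy=x$ if $x,y\in V$, $(x,y)\in E$, and $xy=\infty$ otherwise. $B_n$: binary terms with $x_1,\dots,x_n$ each occurring once in this order; $G(t)$: rooted tree defined by $G(x_i)$ a single vertex and $G(t_1t_2)=G(t_1)\cup G(t_2)$ plus an edge from the leftmost variable of $t_1$ to that of $t_2$; root $x_1$. $T_x$ is the rooted induced subtree of $x$ and its descendants, $h$ is height. With $T=G(t)$, $T'=G(t')$: $Z_{t,t'}$ is the smallest $m\ge0$ such that some $x$ has $T_x=T'_x$, $h(T_x)=m$, and different parents in $T$ and $T'$. A strongly connected component (SCC) is trivial if it is a single vertex without a loop, nontrivial otherwise. For $m\ge1$, an $m$-whirl is a digraph whose vertex set is partitioned into nonempty blocks $B_0,\dots,B_{m-1}$ (indices mod $m$) with edge set exactly $\bigcup_iB_i\times B_{i+1}$. $Z_G$ is the largest $m\ge0$ such that some SCC that is a whirl has a block containing vertices $u,w$ with a walk $u\to v_0\to\dots\to v_m$ and $(w,v_0)\notin E$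 ($\infty$ if unbounded, $-\infty$ if no such $m$). *)

theory Defs
  imports Main "HOL-Library.Extended_Real"
begin

datatype bterm = Var nat | App bterm bterm

fun leaves :: "bterm \<Rightarrow> nat list" where
  "leaves (Var i) = [i]"
| "leaves (App a b) = leaves a @ leaves b"

definition Bn :: "nat \<Rightarrow> bterm set" where
  "Bn n = {t. leaves t = [1..<Suc n]}"

section \<open>The groupoid A(G); elements are 'v option, None standing for infinity\<close>

definition gmul :: "('v \<times> 'v) set \<Rightarrow> 'v option \<Rightarrow> 'v option \<Rightarrow> 'v option" where
  "gmul E a b = (case (a, b) of (Some x, Some y) \<Rightarrow> (if (x, y) \<in> E then Some x else None)
                               | _ \<Rightarrow> None)"

fun eval :: "('v \<times> 'v) set \<Rightarrow> (nat \<Rightarrow> 'v option) \<Rightarrow> bterm \<Rightarrow> 'v option" where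
  "eval E \<sigma> (Var i) = \<sigma> i"
| "eval E \<sigma> (App a b) = gmul E (eval E \<sigma> a) (eval E \<sigma> b)"

definition satisfies :: "'v set \<Rightarrow> ('v \<times> 'v) set \<Rightarrow> bterm \<Rightarrow> bterm \<Rightarrow> bool" where
  "satisfies V E t t' \<longleftrightarrow>
     (\<forall>\<sigma>. (\<forall>i x. \<sigma> i = Some x \<longrightarrow> x \<in> V) \<longrightarrow> eval E \<sigma> t = eval E \<sigma> t')"

fun lm :: "bterm \<Rightarrow> nat" where
  "lm (Var i) = i"
| "lm (App a b) = lm a"

fun tedges :: "bterm \<Rightarrow> (nat \<times> nat) set" where
  "tedges (Var i) = {}"
| "tedges (App a b) = tedges a \<union> tedges b \<union> {(lm a, lm b)}"

definition desc :: "bterm \<Rightarrow> nat \<Rightarrow> nat set" where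
  "desc t x = {y. (x, y) \<in> (tedges t)\<^sup>*}"

definition sub_edges :: "bterm \<Rightarrow> nat \<Rightarrow> (nat \<times> nat) set" where
  "sub_edges t x = tedges t \<inter> (desc t x \<times> desc t x)"

definition same_subtree :: "bterm \<Rightarrow> bterm \<Rightarrow> nat \<Rightarrow> bool" where
  "same_subtree t t' x \<longleftrightarrow> desc t x = desc t' x \<and> sub_edges t x = sub_edges t' x"

definition height :: "bterm \<Rightarrow> nat \<Rightarrow> nat" where
  "height t x = Max {k. \<exists>y. (x, y) \<in> (tedges t) ^^ k}"

definition diff_parents :: "bterm \<Rightarrow> bterm \<Rightarrow> nat \<Rightarrow> bool" where
  "diff_parents t t' x \<longleftrightarrow> (\<exists>p p'. (p, x) \<in> tedges t \<and> (p', x) \<in> tedges t' \<and> p \<noteq> p')"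

definition Z_terms :: "bterm \<Rightarrow> bterm \<Rightarrow> nat" where
  "Z_terms t t' = (LEAST m. \<exists>x \<in> set (leaves t).
       same_subtree t t' x \<and> height t x = m \<and> diff_parents t t' x)"

definition is_scc :: "'v set \<Rightarrow> ('v \<times> 'v) set \<Rightarrow> 'v set \<Rightarrow> bool" where
  "is_scc V E S \<longleftrightarrow> S \<subseteq> V \<and> S \<noteq> {} \<and> (\<forall>x\<in>S. \<forall>y\<in>S. (x, y) \<in> E\<^sup>*) \<and>
     (\<forall>T. S \<subseteq> T \<and> T \<subseteq> V \<and> (\<forall>x\<in>T. \<forall>y\<in>T. (x, y) \<in> E\<^sup>*) \<longrightarrow> T = S)"

definition nontrivial_scc :: "('v \<times> 'v) set \<Rightarrow> 'v set \<Rightarrow> bool" where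
  "nontrivial_scc E S \<longleftrightarrow> \<not> (\<exists>x. S = {x} \<and> (x, x) \<notin> E)"

definition whirl_partition :: "'v set \<Rightarrow> ('v \<times> 'v) set \<Rightarrow> nat \<Rightarrow> (nat \<Rightarrow> 'v set) \<Rightarrow> bool" where
  "whirl_partition S E m B \<longleftrightarrow> m \<ge> 1 \<and> (\<forall>i<m. B i \<noteq> {}) \<and> (\<Union>i<m. B i) = S \<and>
     (\<forall>i<m. \<forall>j<m. i \<noteq> j \<longrightarrow> B i \<inter> B j = {}) \<and>
     E \<inter> (S \<times> S) = (\<Union>i<m. B i \<times> B (Suc i mod m))"

definition walk :: "('v \<times> 'v) set \<Rightarrow> 'v \<Rightarrow> (nat \<Rightarrow> 'v) \<Rightarrow> nat \<Rightarrow> bool" where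
  "walk E u v m \<longleftrightarrow> (u, v 0) \<in> E \<and> (\<forall>i<m. (v i, v (Suc i)) \<in> E)"

definition ZG_witness :: "'v set \<Rightarrow> ('v \<times> 'v) set \<Rightarrow> nat \<Rightarrow> bool" where
  "ZG_witness V E m \<longleftrightarrow> (\<exists>S k B i u w v. is_scc V E S \<and> whirl_partition S E k B \<and> i < k \<and>
      u \<in> B i \<and> w \<in> B i \<and> walk E u v m \<and> (w, v 0) \<notin> E)"

text \<open>Z_G: supremum in the extended reals; Sup {} = -\<infinity>, unbounded gives \<infinity>.\<close>
definition Z_G :: "'v set \<Rightarrow> ('v \<times> 'v) set \<Rightarrow> ereal" where
  "Z_G V E = Sup ((\<lambda>m. ereal (real m)) ` {m. ZG_witness V E m})"

end

theory Submission
  imports Defs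
begin


abbreviation sl :: "bterm \<Rightarrow> bool" where "sl s \<equiv> sorted_wrt (<) (leaves s)"

lemma lm_in: "lm s \<in> set (leaves s)"
  by (induction s) auto

lemma leaves_ne: "leaves s \<noteq> []"
  by (induction s) auto

lemma hd_leaves: "hd (leaves s) = lm s"
  by (induction s) (auto simp: leaves_ne)

lemma lm_le: "sl s \<Longrightarrow> y \<in> set (leaves s) \<Longrightarrow> lm s \<le> y"
proof (induction s)
  case (App l r)
  then show ?case using lm_in[of l] by (force simp: sorted_wrt_append)
qed auto

lemma tedges_leaves: "(a, b) \<in> tedges s \<Longrightarrow> a \<in> set (leaves s) \<and> b \<in> set (leaves s)"
  by (induction s) (auto simp: lm_in)

lemma tedges_less: "sl s \<Longrightarrow> (a, b) \<in> tedges s \<Longrightarrow> a < b"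
proof (induction s)
  case (App l r)
  then show ?case using lm_in[of l] lm_in[of r] by (auto simp: sorted_wrt_append)
qed auto

lemma tedges_target_ne_lm: "sl s \<Longrightarrow> (a, b) \<in> tedges s \<Longrightarrow> b \<noteq> lm s"
  using tedges_less tedges_leaves lm_le by fastforce

lemma parent_unique: "sl s \<Longrightarrow> (a, b) \<in> tedges s \<Longrightarrow> (a', b) \<in> tedges s \<Longrightarrow> a = a'"
proof (induction s)
  case (App l r)
  have sl: "sl l" "sl r" and dis: "\<forall>x\<in>set (leaves l). \<forall>y\<in>set (leaves r). x < y"
    using App.prems(1) by (auto simp: sorted_wrt_append)
  have A: "b \<in> set (leaves l)" if "(c, b) \<in> tedges l" for c using tedges_leaves that by blast
  have B: "b \<in> set (leaves r) \<and> b \<noteq> lm r" if "(c, b) \<in> tedges r" for c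
    using tedges_leaves tedges_target_ne_lm sl that by blast
  have C: "b \<notin> set (leaves l)" if "b \<in> set (leaves r)" using dis that by fastforce
  show ?case using App.prems(2,3) App.IH sl A B C lm_in[of r] by auto
qed auto

lemma parent_exists: "y \<in> set (leaves s) \<Longrightarrow> y \<noteq> lm s \<Longrightarrow> \<exists>a. (a, y) \<in> tedges s"
  by (induction s) auto

lemma rtr_le: "(x, y) \<in> (tedges s)\<^sup>* \<Longrightarrow> sl s \<Longrightarrow> x \<le> y"
  by (induction rule: rtrancl_induct) (auto dest: tedges_less)

fun lab :: "bterm \<Rightarrow> nat \<Rightarrow> nat \<Rightarrow> nat" where
  "lab (Var i) c j = c"
| "lab (App a b) c j = (if j \<in> set (leaves b) then lab b (Suc c) j else lab a c j)"

lemma lab_lm: "sl s \<Longrightarrow> lab s c (lm s) = c"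
proof (induction s arbitrary: c)
  case (App l r)
  then show ?case using lm_in[of l] by (force simp: sorted_wrt_append)
qed auto

lemma lab_edge: "sl s \<Longrightarrow> (a, b) \<in> tedges s \<Longrightarrow> lab s c b = Suc (lab s c a)"
proof (induction s arbitrary: c)
  case (App l r)
  have sl: "sl l" "sl r" and dis: "\<forall>x\<in>set (leaves l). \<forall>y\<in>set (leaves r). x < y"
    using App.prems(1) by (auto simp: sorted_wrt_append)
  have C: "z \<notin> set (leaves r)" if "z \<in> set (leaves l)" for z using dis that by fastforce
  show ?case using App.prems(2) App.IH sl C tedges_leaves lm_in[of l] lm_in[of r] lab_lm[OF sl(2)] lab_lm[OF sl(1)]
    by auto
qed auto

lemma rtr_lab: "(x, y) \<in> (tedges s)\<^sup>* \<Longrightarrow> sl s \<Longrightarrow>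
   lab s c x \<le> lab s c y \<and> (x, y) \<in> (tedges s) ^^ (lab s c y - lab s c x)"
proof (induction rule: rtrancl_induct)
  case base
  then show ?case by simp
next
  case (step y z)
  then have e: "lab s c z = Suc (lab s c y)" using lab_edge by blast
  then have "lab s c z - lab s c x = Suc (lab s c y - lab s c x)" using step by (simp add: Suc_diff_le)
  then show ?case using step e by auto
qed

lemma pow_bound: "(x, y) \<in> (tedges s) ^^ k \<Longrightarrow> sl s \<Longrightarrow> k = 0 \<or> (y \<in> set (leaves s) \<and> x + k \<le> y)"
proof (induction k arbitrary: y)
  case (Suc k)
  then obtain z where z1: "(x, z) \<in> (tedges s) ^^ k" and z2: "(z, y) \<in> tedges s" by auto
  have ih: "k = 0 \<or> (z \<in> set (leaves s) \<and> x + k \<le> z)" using Suc.IH[OF z1 Suc.prems(2)] .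
  have zy: "z < y" "y \<in> set (leaves s)" using tedges_less[OF Suc.prems(2) z2] tedges_leaves[OF z2] by auto
  show ?case
  proof (cases "k = 0")
    case True
    then have "x = z" using z1 by simp
    then show ?thesis using zy True by simp
  next
    case False
    then show ?thesis using ih zy by simp
  qed
qed auto

lemma height_finite: "sl s \<Longrightarrow> finite {k. \<exists>y. (x, y) \<in> (tedges s) ^^ k}"
proof -
  assume sl: "sl s"
  have "{k. \<exists>y. (x, y) \<in> (tedges s) ^^ k} \<subseteq> {..Max (set (leaves s))}"
  proof
    fix k assume "k \<in> {k. \<exists>y. (x, y) \<in> (tedges s) ^^ k}"
    then obtain y where "(x, y) \<in> (tedges s) ^^ k" by auto
    from pow_bound[OF this sl] have "k = 0 \<or> (y \<in> set (leaves s) \<and> x + k \<le> y)" .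
    then show "k \<in> {..Max (set (leaves s))}"
    proof
      assume "y \<in> set (leaves s) \<and> x + k \<le> y"
      then have "y \<le> Max (set (leaves s))" "k \<le> y" by auto
      then show ?thesis by simp
    qed simp
  qed
  then show ?thesis using finite_subset by blast
qed

lemma height_ge: "sl s \<Longrightarrow> (x, y) \<in> (tedges s) ^^ k \<Longrightarrow> k \<le> height s x"
proof -
  assume a: "sl s" "(x, y) \<in> (tedges s) ^^ k"
  have "k \<in> {k. \<exists>y. (x, y) \<in> (tedges s) ^^ k}" using a(2) by blast
  then show ?thesis unfolding height_def using Max_ge[OF height_finite[OF a(1)]] by blast
qed



lemma eval_char: "eval E \<sigma> s = (if (\<forall>i\<in>set (leaves s). \<sigma> i \<noteq> None) \<and>
     (\<forall>(a, b)\<in>tedges s. (the (\<sigma> a), the (\<sigma> b)) \<in> E) then \<sigma> (lm s) else None)"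
proof (induction s)
  case (Var i)
  then show ?case by auto
next
  case (App l r)
  show ?case
  proof (cases "(\<forall>i\<in>set (leaves l). \<sigma> i \<noteq> None) \<and> (\<forall>(a, b)\<in>tedges l. (the (\<sigma> a), the (\<sigma> b)) \<in> E)
     \<and> (\<forall>i\<in>set (leaves r). \<sigma> i \<noteq> None) \<and> (\<forall>(a, b)\<in>tedges r. (the (\<sigma> a), the (\<sigma> b)) \<in> E)")
    case True
    then obtain x y where "\<sigma> (lm l) = Some x" "\<sigma> (lm r) = Some y" using lm_in[of l] lm_in[of r] by blast
    then show ?thesis using True App by (auto simp: gmul_def)
  next
    case False
    then have "eval E \<sigma> l = None \<or> eval E \<sigma> r = None" using App by auto
    then have ev: "eval E \<sigma> (App l r) = None" by (auto simp: gmul_def split: option.splits)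
    have nc: "\<not> ((\<forall>i\<in>set (leaves (App l r)). \<sigma> i \<noteq> None) \<and>
     (\<forall>(a, b)\<in>tedges (App l r). (the (\<sigma> a), the (\<sigma> b)) \<in> E))" using False by auto
    show ?thesis by (subst if_not_P[OF nc]) (rule ev)
  qed
qed

lemma split_eq:
  fixes xs :: "nat list"
  assumes "sorted_wrt (<) (xs @ ys)" "xs @ ys = xs' @ ys'" "ys \<noteq> []" "ys' \<noteq> []" "hd ys = hd ys'"
  shows "xs = xs' \<and> ys = ys'"
proof -
  obtain h zs zs' where ys: "ys = h # zs" and ys': "ys' = h # zs'" using assms(3,4,5)
    by (metis list.collapse)
  have "sorted_wrt (<) (xs' @ ys')" using assms(1,2) by simp
  then have "\<forall>z\<in>set xs'. z < h" "\<forall>z\<in>set xs. z < h" using assms(1) ys ys' by (auto simp: sorted_wrt_append)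
  then have "takeWhile (\<lambda>z. z < h) (xs @ ys) = xs" "takeWhile (\<lambda>z. z < h) (xs' @ ys') = xs'"
    using ys ys' by auto
  then have "xs = xs'" using assms(2) by simp
  then show ?thesis using assms(2) by simp
qed

lemma children_lm:
  assumes "sl (App a b)"
  shows "(lm a, lm b) \<in> tedges (App a b) \<and> (\<forall>y. (lm a, y) \<in> tedges (App a b) \<longrightarrow> y \<le> lm b)"
proof -
  have sl: "sl a" "sl b" and dis: "\<forall>x\<in>set (leaves a). \<forall>y\<in>set (leaves b). x < y"
    using assms by (auto simp: sorted_wrt_append)
  have "y \<le> lm b" if "(lm a, y) \<in> tedges (App a b)" for y
  proof -
    have "(lm a, y) \<in> tedges a \<or> (lm a, y) \<in> tedges b \<or> y = lm b" using that by auto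
    moreover have "(lm a, y) \<notin> tedges b" using tedges_leaves dis lm_in[of a] by fastforce
    moreover have "y < lm b" if "(lm a, y) \<in> tedges a" using tedges_leaves that dis lm_in[of b] by blast
    ultimately show ?thesis by fastforce
  qed
  then show ?thesis by auto
qed

lemma tedges_restrict:
  assumes "sl (App a b)"
  shows "tedges a = tedges (App a b) \<inter> (set (leaves a) \<times> set (leaves a))"
    "tedges b = tedges (App a b) \<inter> (set (leaves b) \<times> set (leaves b))"
proof -
  have dis: "\<forall>x\<in>set (leaves a). \<forall>y\<in>set (leaves b). x < y"
    using assms by (auto simp: sorted_wrt_append)
  then have d2: "x \<in> set (leaves a) \<Longrightarrow> x \<notin> set (leaves b)" for x by fastforce
  show "tedges a = tedges (App a b) \<inter> (set (leaves a) \<times> set (leaves a))"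
    using tedges_leaves[of _ _ a] tedges_leaves[of _ _ b] d2 lm_in[of b] by fastforce
  show "tedges b = tedges (App a b) \<inter> (set (leaves b) \<times> set (leaves b))"
    using tedges_leaves[of _ _ a] tedges_leaves[of _ _ b] d2 lm_in[of a] by fastforce
qed

lemma tedges_inj: "sl s \<Longrightarrow> sl s' \<Longrightarrow> leaves s = leaves s' \<Longrightarrow> tedges s = tedges s' \<Longrightarrow> s = s'"
proof (induction s arbitrary: s')
  case (Var i)
  then show ?case by (cases s') auto
next
  case (App a b)
  show ?case
  proof (cases s')
    case (Var j)
    then show ?thesis using App.prems(4) by auto
  next
    case s': (App a' b')
    have sl2: "sl (App a' b')" using App.prems(2) s' by simp
    have lmeq: "lm a = lm a'" using App.prems(3) hd_leaves[of "App a b"] hd_leaves[of s'] s' by simp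
    have c1: "(lm a, lm b) \<in> tedges (App a b) \<and> (\<forall>y. (lm a, y) \<in> tedges (App a b) \<longrightarrow> y \<le> lm b)"
      using children_lm App.prems(1) by blast
    have c2: "(lm a', lm b') \<in> tedges (App a' b') \<and> (\<forall>y. (lm a', y) \<in> tedges (App a' b') \<longrightarrow> y \<le> lm b')"
      using children_lm sl2 by blast
    have te: "tedges (App a b) = tedges (App a' b')" using App.prems(4) s' by simp
    have "lm b \<le> lm b'" using c1 c2 lmeq te by metis
    moreover have "lm b' \<le> lm b" using c1 c2 lmeq te by metis
    ultimately have lmb: "lm b = lm b'" by simp
    have "leaves a @ leaves b = leaves a' @ leaves b'" using App.prems(3) s' by simp
    then have le: "leaves a = leaves a' \<and> leaves b = leaves b'"
      using split_eq[of "leaves a" "leaves b" "leaves a'" "leaves b'"] App.prems(1) lmb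
      leaves_ne hd_leaves by simp
    have "tedges a = tedges a'"
      using tedges_restrict(1)[OF App.prems(1)] tedges_restrict(1)[OF sl2] te le by simp
    moreover have "tedges b = tedges b'"
      using tedges_restrict(2)[OF App.prems(1)] tedges_restrict(2)[OF sl2] te le by simp
    moreover have "sl a" "sl b" "sl a'" "sl b'" using App.prems(1) sl2 by (auto simp: sorted_wrt_append)
    ultimately show ?thesis using App.IH le s' by metis
  qed
qed

lemma diff_parents_sym: "diff_parents t t' x = diff_parents t' t x"
  unfolding diff_parents_def by blast

lemma transfer_edge:
  assumes "sl t" "sl t'" "leaves t = leaves t'" "\<not> diff_parents t t' b" "(a, b) \<in> tedges t"
  shows "(a, b) \<in> tedges t'"
proof -
  have b: "b \<in> set (leaves t')" using tedges_leaves assms(3,5) by metis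
  have "lm t = lm t'" using assms(3) hd_leaves by metis
  then have "b \<noteq> lm t'" using tedges_target_ne_lm assms by metis
  then obtain a' where "(a', b) \<in> tedges t'" using parent_exists b by blast
  then show ?thesis using assms(4,5) unfolding diff_parents_def by blast
qed

lemma desc_sub:
  assumes "sl t" "sl t'" "leaves t = leaves t'" "\<forall>z\<in>set (leaves t). x < z \<longrightarrow> \<not> diff_parents t t' z"
  shows "desc t x \<subseteq> desc t' x"
proof
  fix y assume "y \<in> desc t x"
  then have "(x, y) \<in> (tedges t)\<^sup>*" by (simp add: desc_def)
  then have "(x, y) \<in> (tedges t')\<^sup>*"
  proof (induction rule: rtrancl_induct)
    case (step y z)
    have "x \<le> y" using rtr_le step assms(1) by blast
    moreover have "y < z" using tedges_less step assms(1) by blast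
    moreover have "z \<in> set (leaves t)" using tedges_leaves step by blast
    ultimately have "(y, z) \<in> tedges t'" using transfer_edge assms step by auto
    then show ?case using step by (meson rtrancl.rtrancl_into_rtrancl)
  qed simp
  then show "y \<in> desc t' x" by (simp add: desc_def)
qed

lemma sub_edges_sub:
  assumes "sl t" "sl t'" "leaves t = leaves t'" "\<forall>z\<in>set (leaves t). x < z \<longrightarrow> \<not> diff_parents t t' z"
  shows "sub_edges t x \<subseteq> sub_edges t' x"
proof
  fix e assume e: "e \<in> sub_edges t x"
  obtain a b where ab: "e = (a, b)" by fastforce
  have ed: "(a, b) \<in> tedges t" "a \<in> desc t x" "b \<in> desc t x" using e ab by (auto simp: sub_edges_def)
  have "x \<le> a" using rtr_le ed assms(1) by (auto simp: desc_def)
  moreover have "a < b" using tedges_less ed assms(1) by blast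
  moreover have "b \<in> set (leaves t)" using tedges_leaves ed by blast
  ultimately have "(a, b) \<in> tedges t'" using transfer_edge assms ed by auto
  then show "e \<in> sub_edges t' x" using ab ed desc_sub[OF assms] by (auto simp: sub_edges_def)
qed

lemma exists_witness:
  assumes "sl t" "sl t'" "leaves t = leaves t'" "t \<noteq> t'"
  shows "\<exists>x\<in>set (leaves t). same_subtree t t' x \<and> diff_parents t t' x"
proof -
  define X where "X = {x\<in>set (leaves t). diff_parents t t' x}"
  have fin: "finite X" unfolding X_def by simp
  have ne: "X \<noteq> {}"
  proof
    assume "X = {}"
    then have nd: "\<forall>x\<in>set (leaves t). \<not> diff_parents t t' x" unfolding X_def by blast
    have "tedges t \<subseteq> tedges t'"
      using transfer_edge[OF assms(1,2,3)] nd tedges_leaves by fastforce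
    moreover have "tedges t' \<subseteq> tedges t"
      using transfer_edge[OF assms(2,1) assms(3)[symmetric]] nd tedges_leaves diff_parents_sym assms(3)
      by fastforce
    ultimately show False using tedges_inj assms by blast
  qed
  define x where "x = Max X"
  have xX: "x \<in> X" using fin ne x_def by simp
  have big: "\<forall>z\<in>set (leaves t). x < z \<longrightarrow> \<not> diff_parents t t' z"
    using fin x_def X_def Max_ge leD by blast
  have big': "\<forall>z\<in>set (leaves t'). x < z \<longrightarrow> \<not> diff_parents t' t z"
    using big assms(3) diff_parents_sym by metis
  have "same_subtree t t' x"
    unfolding same_subtree_def
    using desc_sub[OF assms(1,2,3) big] desc_sub[OF assms(2,1) assms(3)[symmetric] big']
      sub_edges_sub[OF assms(1,2,3) big] sub_edges_sub[OF assms(2,1) assms(3)[symmetric] big'] by blast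
  then show ?thesis using xX X_def by blast
qed



lemma whirl_edge:
  assumes wp: "whirl_partition S E k B" and j: "j < k" and a: "a \<in> B j" and b: "b \<in> B (Suc j mod k)"
  shows "(a, b) \<in> E"
proof -
  have "(a, b) \<in> (\<Union>i<k. B i \<times> B (Suc i mod k))" using j a b by blast
  then show ?thesis using wp unfolding whirl_partition_def by blast
qed

lemma whirl_sub: "whirl_partition S E k B \<Longrightarrow> j < k \<Longrightarrow> B j \<subseteq> S"
  unfolding whirl_partition_def by blast

lemma step:
  assumes slt: "sl t" and slt': "sl t'" and leq: "leaves t = leaves t'"
    and sat: "satisfies V E t t'" and EV: "E \<subseteq> V \<times> V"
    and xin: "x \<in> set (leaves t)" and ss: "same_subtree t t' x"
    and pp: "(p, x) \<in> tedges t" and pp': "(p', x) \<in> tedges t'" and pne: "p \<noteq> p'"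
    and wp: "whirl_partition S E k B" and SV: "S \<subseteq> V" and ak: "a < k"
    and uB: "u \<in> B a" and wB: "w \<in> B ((a + ((k * lab t 0 p - lab t 0 p) + lab t 0 p')) mod k)"
    and wk: "walk E u v (height t x)"
  shows "(w, v 0) \<in> E"
proof -
  define L where "L = lab t 0"
  define c0 where "c0 = a + (k * L p - L p)"
  define pick where "pick j = (SOME z. z \<in> B j)" for j
  define blk where "blk y = (c0 + L y) mod k" for y
  define Z where "Z = height t x"
  define \<sigma> where "\<sigma> y = Some (if y \<notin> set (leaves t) then u else if y \<in> desc t x then v (L y - L x)
      else if y = p then u else if y = p' then w else pick (blk y))" for y
  have k1: "k \<ge> 1" using wp unfolding whirl_partition_def by simp
  have pick: "pick j \<in> B j" if "j < k" for j
    using wp that unfolding whirl_partition_def pick_def by (simp add: some_in_eq)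
  have blkk: "blk y < k" for y using k1 unfolding blk_def by simp
  have kL: "L p \<le> k * L p" using k1 by simp
  have "c0 + L p = a + k * L p" using kL unfolding c0_def by linarith
  then have blkp: "blk p = a" unfolding blk_def using ak by simp
  have blkp': "blk p' = (a + ((k * L p - L p) + L p')) mod k" unfolding blk_def c0_def by (simp add: add.assoc)
  have desc_ge: "x \<le> y" if "y \<in> desc t x" for y using rtr_le that slt by (auto simp: desc_def)
  have desc_Z: "L y - L x \<le> Z \<and> L x \<le> L y" if "y \<in> desc t x" for y
    using rtr_lab[of x y t 0] that slt height_ge[OF slt] unfolding desc_def Z_def L_def by auto
  have px: "p < x" using tedges_less pp slt by blast
  have pnd: "p \<notin> desc t x" using px desc_ge by fastforce
  have p'in: "p' \<in> set (leaves t)" using tedges_leaves pp' leq by metis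
  have p'nd: "p' \<notin> desc t x"
  proof
    assume "p' \<in> desc t x"
    then have "p' \<in> desc t' x" using ss by (simp add: same_subtree_def)
    then have "x \<le> p'" using rtr_le slt' by (auto simp: desc_def)
    moreover have "p' < x" using tedges_less pp' slt' by blast
    ultimately show False by simp
  qed
  have pin: "p \<in> set (leaves t)" using tedges_leaves pp by blast
  have wk0: "(u, v 0) \<in> E" and wks: "\<And>i. i < Z \<Longrightarrow> (v i, v (Suc i)) \<in> E"
    using wk unfolding walk_def Z_def by auto
  have vV: "v i \<in> V" if "i \<le> Z" for i
  proof (cases i)
    case 0 then show ?thesis using wk0 EV by auto
  next
    case (Suc j) then show ?thesis using wks[of j] that EV by auto
  qed
  have uV: "u \<in> V" using wk0 EV by auto
  have BV: "B j \<subseteq> V" if "j < k" for j using whirl_sub[OF wp that] SV by blast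
  have wV: "w \<in> V" using wB BV k1 by (meson mod_less_divisor less_le_trans zero_less_one subsetD)
  have wB': "w \<in> B (blk p')" using wB blkp' unfolding L_def by simp
  have outblk: "the (\<sigma> y) \<in> B (blk y)" if "y \<in> set (leaves t)" "y \<notin> desc t x" for y
    using that blkp wB' uB pick blkk unfolding \<sigma>_def by auto
  have \<sigma>V: "\<forall>i z. \<sigma> i = Some z \<longrightarrow> z \<in> V"
  proof (intro allI impI)
    fix i z assume h: "\<sigma> i = Some z"
    show "z \<in> V"
    proof (cases "i \<in> set (leaves t) \<and> i \<notin> desc t x")
      case True
      then have "z \<in> B (blk i)" using outblk h by fastforce
      then show ?thesis using BV blkk by blast
    next
      case False
      then show ?thesis using h uV vV desc_Z unfolding \<sigma>_def by (auto split: if_splits)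
    qed
  qed
  have hom: "(the (\<sigma> a'), the (\<sigma> b)) \<in> E" if e: "(a', b) \<in> tedges t" for a' b
  proof -
    have ain: "a' \<in> set (leaves t)" and bin: "b \<in> set (leaves t)" using tedges_leaves e by auto
    have Lab: "L b = Suc (L a')" using lab_edge slt e unfolding L_def by blast
    show ?thesis
    proof (cases "b \<in> desc t x")
      case False
      then have "a' \<notin> desc t x" using e unfolding desc_def
        by (meson mem_Collect_eq rtrancl.rtrancl_into_rtrancl)
      then have A: "the (\<sigma> a') \<in> B (blk a')" and Bb: "the (\<sigma> b) \<in> B (blk b)"
        using outblk ain bin False by auto
      have "blk b = Suc (blk a') mod k" unfolding blk_def using Lab by (simp add: mod_Suc_eq)
      then show ?thesis using whirl_edge[OF wp blkk A] Bb by simp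
    next
      case bd: True
      show ?thesis
      proof (cases "a' \<in> desc t x")
        case True
        have "L b - L x \<le> Z" "L x \<le> L a'" using desc_Z bd True by auto
        then have i: "L a' - L x < Z" and j: "L b - L x = Suc (L a' - L x)" using Lab by auto
        then show ?thesis using wks[OF i] True bd ain bin unfolding \<sigma>_def by simp
      next
        case False
        have "b = x"
        proof (rule ccontr)
          assume "b \<noteq> x"
          then obtain c where "(x, c) \<in> (tedges t)\<^sup>*" "(c, b) \<in> tedges t"
            using bd unfolding desc_def by (metis mem_Collect_eq rtranclE)
          then have "c = a'" using parent_unique slt e by blast
          then show False using False \<open>(x, c) \<in> (tedges t)\<^sup>*\<close> unfolding desc_def by simp
        qed
        then have "a' = p" using parent_unique slt e pp by blast
        then show ?thesis using \<open>b = x\<close> pnd pin xin wk0 unfolding \<sigma>_def desc_def by simp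
      qed
    qed
  qed
  have h1: "\<forall>i\<in>set (leaves t). \<sigma> i \<noteq> None" by (simp add: \<sigma>_def)
  have h2: "\<forall>(a, b)\<in>tedges t. (the (\<sigma> a), the (\<sigma> b)) \<in> E" using hom by blast
  have "eval E \<sigma> t = \<sigma> (lm t)"
    using eval_char[of E \<sigma> t] h1 h2 by presburger
  moreover have "\<sigma> (lm t) \<noteq> None" by (simp add: \<sigma>_def)
  moreover have "eval E \<sigma> t' = eval E \<sigma> t" using sat \<sigma>V unfolding satisfies_def by metis
  ultimately have "eval E \<sigma> t' \<noteq> None" by simp
  then have "(the (\<sigma> p'), the (\<sigma> x)) \<in> E" using eval_char[of E \<sigma> t'] pp' by (auto split: if_splits)
  then show ?thesis using p'in p'nd pne xin unfolding \<sigma>_def desc_def by simp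
qed



lemma part1:
  fixes t t' :: bterm and V :: "'v set" and E :: "('v \<times> 'v) set"
  assumes "t \<in> Bn n" and "t' \<in> Bn n" and "t \<noteq> t'" and EV: "E \<subseteq> V \<times> V"
    and sat: "satisfies V E t t'"
    and S: "is_scc V E S" and wp: "whirl_partition S E k B" and ik: "i < k"
    and uB: "u \<in> B i" and wB: "w \<in> B i" and wk: "walk E u v (Z_terms t t')"
  shows "(w, v 0) \<in> E"
proof -
  have lt: "leaves t = [1..<Suc n]" "leaves t' = [1..<Suc n]" using assms(1,2) by (auto simp: Bn_def)
  have slt: "sl t" and slt': "sl t'" and leq: "leaves t = leaves t'"
    using lt sorted_wrt_upt[of 1 "Suc n"] by metis+
  obtain x0 where "x0 \<in> set (leaves t)" "same_subtree t t' x0" "diff_parents t t' x0"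
    using exists_witness[OF slt slt' leq assms(3)] by blast
  then have "\<exists>m. \<exists>x \<in> set (leaves t). same_subtree t t' x \<and> height t x = m \<and> diff_parents t t' x"
    by blast
  then have "\<exists>x \<in> set (leaves t). same_subtree t t' x \<and> height t x = Z_terms t t' \<and> diff_parents t t' x"
    unfolding Z_terms_def by (rule LeastI_ex)
  then obtain x where xin: "x \<in> set (leaves t)" and ss: "same_subtree t t' x"
    and hx: "height t x = Z_terms t t'" and dp: "diff_parents t t' x" by blast
  obtain p p' where pp: "(p, x) \<in> tedges t" and pp': "(p', x) \<in> tedges t'" and pne: "p \<noteq> p'"
    using dp unfolding diff_parents_def by blast
  have SV: "S \<subseteq> V" using S unfolding is_scc_def by blast
  have k1: "k \<ge> 1" using wp unfolding whirl_partition_def by simp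
  define D where "D = (k * lab t 0 p - lab t 0 p) + lab t 0 p'"
  have wk': "walk E u' v (height t x)" if "(u', v 0) \<in> E" for u'
    using wk that hx unfolding walk_def by simp
  have stp: "(w', v 0) \<in> E" if "a < k" "u' \<in> B a" "(u', v 0) \<in> E" "w' \<in> B ((a + D) mod k)" for a u' w'
    using step[OF slt slt' leq sat EV xin ss pp pp' pne wp SV that(1,2) _ wk'[OF that(3)]] that(4)
    unfolding D_def by blast
  have "\<forall>w' \<in> B ((i + Suc j * D) mod k). (w', v 0) \<in> E" for j
  proof (induction j)
    case 0
    have "(u, v 0) \<in> E" using wk unfolding walk_def by simp
    then show ?case using stp[OF ik uB] by simp
  next
    case (Suc j)
    define a where "a = (i + Suc j * D) mod k"
    have ak: "a < k" using k1 unfolding a_def by simp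
    then obtain u' where u': "u' \<in> B a" using wp unfolding whirl_partition_def by blast
    have "(u', v 0) \<in> E" using Suc u' unfolding a_def by blast
    moreover have "(a + D) mod k = (i + Suc (Suc j) * D) mod k"
      unfolding a_def by (simp add: mod_add_left_eq mod_add_right_eq algebra_simps)
    ultimately show ?case using stp[OF ak u'] by auto
  qed
  from this[of "k - 1"] have "\<forall>w' \<in> B ((i + k * D) mod k). (w', v 0) \<in> E" using k1 by simp
  then show ?thesis using wB ik by simp
qed

theorem lemma6p16:
  fixes n :: nat and t t' :: bterm and V :: "'v set" and E :: "('v \<times> 'v) set"
  assumes "t \<in> Bn n" and "t' \<in> Bn n" and "t \<noteq> t'"
    and "E \<subseteq> V \<times> V"
    and "satisfies V E t t'"
  shows "(\<forall>S k B i u w v. is_scc V E S \<and> nontrivial_scc E S \<and> whirl_partition S E k B \<and>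
            i < k \<and> u \<in> B i \<and> w \<in> B i \<and> walk E u v (Z_terms t t') \<longrightarrow> (w, v 0) \<in> E)
         \<and> Z_G V E < ereal (real (Z_terms t t'))"
proof
  show "\<forall>S k B i u w v. is_scc V E S \<and> nontrivial_scc E S \<and> whirl_partition S E k B \<and>
            i < k \<and> u \<in> B i \<and> w \<in> B i \<and> walk E u v (Z_terms t t') \<longrightarrow> (w, v 0) \<in> E"
    using part1[OF assms] by blast
  define Z where "Z = Z_terms t t'"
  have lt: "m < Z" if wit: "ZG_witness V E m" for m
  proof (rule ccontr)
    assume "\<not> m < Z"
    obtain S k B i u w v where h: "is_scc V E S" "whirl_partition S E k B" "i < k"
      "u \<in> B i" "w \<in> B i" "walk E u v m" "(w, v 0) \<notin> E"
      using wit unfolding ZG_witness_def by blast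
    have "walk E u v Z" using h(6) \<open>\<not> m < Z\<close> unfolding walk_def by simp
    then show False using part1[OF assms h(1-5)] h(7) unfolding Z_def by blast
  qed
  show "Z_G V E < ereal (real (Z_terms t t'))"
  proof (cases "{m. ZG_witness V E m} = {}")
    case True
    then have e: "(\<lambda>m. ereal (real m)) ` {m. ZG_witness V E m} = {}" by simp
    show ?thesis unfolding Z_G_def e by (simp add: bot_ereal_def)
  next
    case False
    then have Z1: "Z \<ge> 1" using lt by fastforce
    have "Z_G V E \<le> ereal (real (Z - 1))"
      unfolding Z_G_def using lt by (intro Sup_least) (force simp: of_nat_diff)
    also have "\<dots> < ereal (real Z)" using Z1 by simp
    finally show ?thesis unfolding Z_def .
  qed
qed


end
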